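(* Assume values are i.i.d. with a regular distribution $F$ on $[0,\bar v]$ with density $f > 0$, and $2 \le k < n$. Let $\bar R$ be the expected revenue $\mathbb E[\sum_i P_i(\bm v)]$ of any payment rule $P$ that implements the efficient allocation rule (and satisfies interim individual rationality). Then $\bar R < -(n-k)\,\phi(0)$.
   Context: Setting: $n$ risk-neutral unit-demand bidders and $k$ identical items. Values $v_1,\dots,v_n$ are i.i.d. on $[0,\bar v]$ with CDF $F$ and density $f>0$. The virtual value function is $\phi(v) = v - \frac{1-F(v)}{f(v)}$; $F$ is regular if $\phi$ is strictly increasing. The efficient allocation rule gives one item to each of the $k$ bidders with the highest values (ties, a probability-zero event, broken by any fixed rule). For an allocation rule $A$, $x_i(v_i) = \mathbb E[A_i(\bm v)\mid v_i]$ and $z_i(v_i) = v_i x_i(v_i) - \int_0^{v_i} x_i(u)\,du$. A payment rule $P : [0,\bar v]^n \to [0,\infty)^n$ implements $A$ if $(A,P)$ is Bayesian incentive compatible and $\mathbb E[P_i(\bm v)\mid v_i] = z_i(v_i)$ for all $i, v_i$. Interim individual rationality: $\mathbb E[v_iA_i(\bm v) - P_i(\bm v)\mid v_i] \ge 0$ for all $i, v_i$. *)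

theory Defs
  imports "HOL-Probability.Probability"
begin

definition val_dist :: "real \<Rightarrow> (real \<Rightarrow> real) \<Rightarrow> real measure" where
  "val_dist vb f = density lborel (\<lambda>x. ennreal (f x * indicator {0..vb} x))"

definition prof_dist :: "nat \<Rightarrow> real \<Rightarrow> (real \<Rightarrow> real) \<Rightarrow> (nat \<Rightarrow> real) measure" where
  "prof_dist n vb f = PiM {..<n} (\<lambda>_. val_dist vb f)"

definition profiles :: "nat \<Rightarrow> real \<Rightarrow> (nat \<Rightarrow> real) set" where
  "profiles n vb = {v. \<forall>i<n. v i \<in> {0..vb}}"

definition cdf :: "(real \<Rightarrow> real) \<Rightarrow> real \<Rightarrow> real" where
  "cdf f t = integral {0..t} f"

definition virt :: "(real \<Rightarrow> real) \<Rightarrow> real \<Rightarrow> real" where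
  "virt f t = t - (1 - cdf f t) / f t"

text \<open>Efficient allocation: the k highest values win; ties broken by index (lower index wins).\<close>
definition eff_alloc :: "nat \<Rightarrow> nat \<Rightarrow> (nat \<Rightarrow> real) \<Rightarrow> nat \<Rightarrow> real" where
  "eff_alloc n k v i =
     (if card {j\<in>{..<n}. v j > v i \<or> (v j = v i \<and> j < i)} < k then 1 else 0)"

text \<open>Interim expectation E[g(v) | v_i = t]: by independence, integrate g with coordinate i fixed to t.\<close>
definition interim :: "nat \<Rightarrow> real \<Rightarrow> (real \<Rightarrow> real) \<Rightarrow> ((nat \<Rightarrow> real) \<Rightarrow> real) \<Rightarrow> nat \<Rightarrow> real \<Rightarrow> real" where
  "interim n vb f g i t = (\<integral>v. g (v(i := t)) \<partial>prof_dist n vb f)"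

definition x_eff :: "nat \<Rightarrow> nat \<Rightarrow> real \<Rightarrow> (real \<Rightarrow> real) \<Rightarrow> nat \<Rightarrow> real \<Rightarrow> real" where
  "x_eff n k vb f i t = interim n vb f (\<lambda>v. eff_alloc n k v i) i t"

definition z_eff :: "nat \<Rightarrow> nat \<Rightarrow> real \<Rightarrow> (real \<Rightarrow> real) \<Rightarrow> nat \<Rightarrow> real \<Rightarrow> real" where
  "z_eff n k vb f i t = t * x_eff n k vb f i t - integral {0..t} (x_eff n k vb f i)"

text \<open>P implements the efficient allocation rule (BIC, interim payments = z), and is interim IR.\<close>
definition implements_eff_IR ::
  "nat \<Rightarrow> nat \<Rightarrow> real \<Rightarrow> (real \<Rightarrow> real) \<Rightarrow> ((nat \<Rightarrow> real) \<Rightarrow> nat \<Rightarrow> real) \<Rightarrow> bool" where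
  "implements_eff_IR n k vb f P \<longleftrightarrow>
     (\<forall>v\<in>profiles n vb. \<forall>i<n. P v i \<ge> 0) \<and>
     (\<forall>i<n. integrable (prof_dist n vb f) (\<lambda>v. P v i)) \<and>
     (\<forall>i<n. \<forall>t\<in>{0..vb}. integrable (prof_dist n vb f) (\<lambda>v. P (v(i := t)) i)) \<and>
     (\<forall>i<n. \<forall>t\<in>{0..vb}. \<forall>s\<in>{0..vb}.
        t * x_eff n k vb f i t - interim n vb f (\<lambda>v. P v i) i t
        \<ge> t * x_eff n k vb f i s - interim n vb f (\<lambda>v. P v i) i s) \<and>
     (\<forall>i<n. \<forall>t\<in>{0..vb}. interim n vb f (\<lambda>v. P v i) i t = z_eff n k vb f i t) \<and>
     (\<forall>i<n. \<forall>t\<in>{0..vb}. t * x_eff n k vb f i t - interim n vb f (\<lambda>v. P v i) i t \<ge> 0)"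

end

theory Submission
  imports Defs
begin


lemma bdd_setint:
  fixes X :: "real \<Rightarrow> real"
  assumes [measurable]: "X \<in> borel_measurable borel" and b: "\<forall>t\<in>{a..b}. \<bar>X t\<bar> \<le> C"
  shows "set_integrable lborel {a..b} X" "X integrable_on {a..b}"
    "(LINT s:{a..b}|lborel. X s) = integral {a..b} X"
proof -
  show si: "set_integrable lborel {a..b} X"
    unfolding set_integrable_def
    by (rule integrableI_bounded_set[where A="{a..b}" and B=C]) (use b in \<open>auto simp: indicator_def emeasure_lborel_Icc_eq\<close>)
  show "X integrable_on {a..b}" "(LINT s:{a..b}|lborel. X s) = integral {a..b} X"
    using set_borel_integral_eq_integral[OF si] by auto
qed

lemma mono_int:
  fixes X :: "real \<Rightarrow> real"
  assumes [measurable]: "X \<in> borel_measurable borel" and b: "\<And>t. 0 \<le> X t \<and> X t \<le> 1"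
  shows "mono (\<lambda>t. integral {0..t} X)" and "\<And>t. 0 \<le> t \<Longrightarrow> 0 \<le> integral {0..t} X \<and> integral {0..t} X \<le> t"
proof -
  have ion: "X integrable_on {a..b}" for a b using bdd_setint(2)[of X a b 1] b by auto
  have nn: "0 \<le> integral {a..b} X" for a b using ion b by (intro integral_nonneg) auto
  show "0 \<le> integral {0..t} X \<and> integral {0..t} X \<le> t" if "0 \<le> t" for t
  proof
    show "0 \<le> integral {0..t} X" by (rule nn)
    have "integral {0..t} X \<le> integral {0..t} (\<lambda>_. 1::real)"
      using ion b by (intro integral_le) auto
    then show "integral {0..t} X \<le> t" using that by simp
  qed
  show "mono (\<lambda>t. integral {0..t} X)"
  proof (rule monoI)
    fix t t' :: real assume "t \<le> t'"
    show "integral {0..t} X \<le> integral {0..t'} X"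
    proof (cases "0 \<le> t")
      case True
      then have "integral {0..t} X + integral {t..t'} X = integral {0..t'} X"
        using \<open>t \<le> t'\<close> ion by (intro Henstock_Kurzweil_Integration.integral_combine) auto
      then show ?thesis using nn[of t t'] by linarith
    next
      case False
      then show ?thesis using nn[of 0 t'] by simp
    qed
  qed
qed

locale S =
  fixes vb :: real and f :: "real \<Rightarrow> real"
  assumes vb: "0 < vb" and fm[measurable]: "f \<in> borel_measurable borel"
    and fpos: "\<forall>x\<in>{0..vb}. f x > 0" and fint: "(f has_integral 1) {0..vb}"
    and smono: "strict_mono_on {0..vb} (virt f)"
begin

definition g0 :: "real \<Rightarrow> real" where "g0 t = f t * indicator {0..vb} t"

lemma g0_meas[measurable]: "g0 \<in> borel_measurable borel"
  unfolding g0_def by measurable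

lemma g0_nonneg: "0 \<le> g0 t"
  using fpos by (auto simp: g0_def indicator_def less_imp_le)

lemma g0_hasint: "(g0 has_integral 1) UNIV"
proof -
  have "(\<lambda>x. if x \<in> {0..vb} then f x else 0) = g0" by (auto simp: g0_def fun_eq_iff)
  then show ?thesis using fint has_integral_restrict_UNIV[of "{0..vb}" f 1] by simp
qed

lemma g0_nn: "integral\<^sup>N lborel g0 = 1"
  using nn_integral_has_integral_lborel[OF g0_meas g0_nonneg g0_hasint] by simp

lemma g0_int: "integrable lborel g0"
  by (rule integrableI_nonneg) (auto simp: g0_nonneg g0_nn)

lemma M_eq: "val_dist vb f = density lborel (\<lambda>x. ennreal (g0 x))"
  by (simp add: val_dist_def g0_def)

lemma sets_M[measurable_cong, simp]: "sets (val_dist vb f) = sets borel"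
  by (simp add: M_eq)

lemma space_M[simp]: "space (val_dist vb f) = UNIV"
  by (simp add: M_eq)

lemma M_prob: "prob_space (val_dist vb f)"
proof
  have "emeasure (val_dist vb f) (space (val_dist vb f)) = (\<integral>\<^sup>+ x. ennreal (g0 x) * indicator UNIV x \<partial>lborel)"
    unfolding M_eq by (subst emeasure_density) auto
  also have "\<dots> = 1" using g0_nn by simp
  finally show "emeasure (val_dist vb f) (space (val_dist vb f)) = 1" .
qed

lemma M_int:
  assumes hm[measurable]: "h \<in> borel_measurable borel" and hb: "\<forall>t\<in>{0..vb}. \<bar>h t\<bar> \<le> B"
  shows "integrable (val_dist vb f) h" "integral\<^sup>L (val_dist vb f) h = integral {0..vb} (\<lambda>t. f t * h t)"
    "(\<lambda>t. f t * h t) integrable_on {0..vb}"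
    "(\<integral>x. g0 x * h x \<partial>lborel) = integral {0..vb} (\<lambda>t. f t * h t)"
proof -
  have B0: "0 \<le> B" using hb vb by (meson abs_ge_zero atLeastAtMost_iff less_imp_le order_trans order_refl)
  have i1: "integrable lborel (\<lambda>x. g0 x *\<^sub>R h x)"
  proof (rule Bochner_Integration.integrable_bound[where f="\<lambda>x. B * g0 x"])
    show "integrable lborel (\<lambda>x. B * g0 x)" using g0_int by simp
    show "(\<lambda>x. g0 x *\<^sub>R h x) \<in> borel_measurable lborel" by measurable
    show "AE x in lborel. norm (g0 x *\<^sub>R h x) \<le> norm (B * g0 x)"
      using hb g0_nonneg B0 by (intro AE_I2) (auto simp: g0_def indicator_def abs_mult mult.commute[of B] intro!: mult_left_mono)
  qed
  show "integrable (val_dist vb f) h"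
    unfolding M_eq by (subst integrable_density) (use i1 in \<open>auto simp: g0_nonneg\<close>)
  have eq: "(\<lambda>x. g0 x *\<^sub>R h x) = (\<lambda>x. indicator {0..vb} x *\<^sub>R (f x * h x))"
    by (auto simp: g0_def fun_eq_iff)
  have si: "set_integrable lborel {0..vb} (\<lambda>x. f x * h x)"
    unfolding set_integrable_def using i1 eq by simp
  have e1: "integral\<^sup>L (val_dist vb f) h = (\<integral>x. g0 x *\<^sub>R h x \<partial>lborel)"
    unfolding M_eq by (subst integral_density) (auto simp: g0_nonneg)
  have e2: "(\<integral>x. g0 x *\<^sub>R h x \<partial>lborel) = integral {0..vb} (\<lambda>t. f t * h t)"
    unfolding eq using set_borel_integral_eq_integral(2)[OF si] unfolding set_lebesgue_integral_def .
  show "integral\<^sup>L (val_dist vb f) h = integral {0..vb} (\<lambda>t. f t * h t)" using e1 e2 by simp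
  show "(\<integral>x. g0 x * h x \<partial>lborel) = integral {0..vb} (\<lambda>t. f t * h t)"
    using e2 by simp
  show "(\<lambda>t. f t * h t) integrable_on {0..vb}" using set_borel_integral_eq_integral(1)[OF si] .
qed

lemma M_AE: "AE t in val_dist vb f. t \<in> {0<..vb}"
proof -
  have "AE t in lborel. t \<noteq> 0" by (rule AE_lborel_singleton)
  then have "AE t in lborel. g0 t \<noteq> 0 \<longrightarrow> t \<in> {0<..vb}"
    by eventually_elim (auto simp: g0_def indicator_def)
  then show ?thesis unfolding M_eq by (subst AE_density) auto
qed


definition cl :: "real \<Rightarrow> real" where "cl t = max 0 (min vb t)"

lemma cl_in: "cl t \<in> {0..vb}" using vb by (auto simp: cl_def)
lemma cl_id: "t \<in> {0..vb} \<Longrightarrow> cl t = t" by (auto simp: cl_def)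
lemma cl_mono: "mono cl" by (auto simp: cl_def mono_def)

lemma f_ion0: "f integrable_on {0..vb}" using fint by (rule has_integral_integrable)

lemma f_ion: "a \<ge> 0 \<Longrightarrow> b \<le> vb \<Longrightarrow> f integrable_on {a..b}"
  by (rule integrable_on_subinterval[OF f_ion0]) auto

lemma cdf_split: "0 \<le> s \<Longrightarrow> s \<le> vb \<Longrightarrow> cdf f s + integral {s..vb} f = 1"
  unfolding cdf_def using Henstock_Kurzweil_Integration.integral_combine[of 0 s vb f, OF _ _ f_ion0] integral_unique[OF fint]
  by simp

lemma cdf_mono: "0 \<le> a \<Longrightarrow> a \<le> b \<Longrightarrow> b \<le> vb \<Longrightarrow> cdf f a \<le> cdf f b"
proof -
  assume h: "0 \<le> a" "a \<le> b" "b \<le> vb"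
  have "integral {0..a} f + integral {a..b} f = integral {0..b} f"
    using h f_ion[of 0 b] by (intro Henstock_Kurzweil_Integration.integral_combine) auto
  moreover have "0 \<le> integral {a..b} f"
    using h f_ion[of a b] fpos by (intro integral_nonneg) (auto intro: less_imp_le)
  ultimately show ?thesis unfolding cdf_def by linarith
qed

lemma cdf_bnd: "0 \<le> s \<Longrightarrow> s \<le> vb \<Longrightarrow> 0 \<le> cdf f s \<and> cdf f s \<le> 1"
proof -
  assume h: "0 \<le> s" "s \<le> vb"
  have "cdf f 0 = 0" by (simp add: cdf_def)
  moreover have "cdf f vb = 1" using fint by (simp add: cdf_def integral_unique)
  ultimately show ?thesis using cdf_mono[of 0 s] cdf_mono[of s vb] h vb by auto
qed

definition cc :: "real \<Rightarrow> real" where "cc t = cdf f (cl t)"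

lemma cc_meas[measurable]: "cc \<in> borel_measurable borel"
proof (rule borel_measurable_mono)
  show "mono cc" unfolding cc_def mono_def
    using cl_mono cl_in by (auto intro!: cdf_mono simp: mono_def)
qed

definition psi :: "real \<Rightarrow> real" where "psi t = virt f (cl t)"

lemma psi_meas[measurable]: "psi \<in> borel_measurable borel"
proof (rule borel_measurable_mono)
  show "mono psi" unfolding psi_def mono_def
  proof (intro allI impI)
    fix x y :: real assume "x \<le> y"
    then have "cl x \<le> cl y" using cl_mono by (auto simp: mono_def)
    then show "virt f (cl x) \<le> virt f (cl y)"
      using smono cl_in[of x] cl_in[of y] by (cases "cl x = cl y") (auto simp: strict_mono_on_def less_le)
  qed
qed

lemma psi_bnd: "\<bar>psi t\<bar> \<le> \<bar>virt f 0\<bar> + \<bar>virt f vb\<bar>"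
proof -
  have a: "virt f 0 \<le> psi t" unfolding psi_def
    using smono cl_in[of t] vb by (cases "cl t = 0") (auto simp: strict_mono_on_def less_le)
  have b: "psi t \<le> virt f vb" unfolding psi_def
    using smono cl_in[of t] vb by (cases "cl t = vb") (auto simp: strict_mono_on_def less_le)
  show ?thesis using a b by linarith
qed

lemma E:
  assumes Xm[measurable]: "X \<in> borel_measurable borel" and Xb: "\<And>t. 0 \<le> X t \<and> X t \<le> 1"
  shows "integral {0..vb} (\<lambda>t. f t * (t * X t - integral {0..t} X)) = integral {0..vb} (\<lambda>t. f t * (X t * virt f t))"
proof -
  define A where "A t = integral {0..t} X" for t
  have Am[measurable]: "A \<in> borel_measurable borel"
    using mono_int(1)[OF Xm Xb] borel_measurable_mono unfolding A_def by blast
  have Ab: "0 \<le> A t \<and> A t \<le> t" if "0 \<le> t" for t using mono_int(2)[OF Xm Xb that] A_def by simp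
  define K where "K = (\<lambda>x::real\<times>real. g0 (fst x) * (if 0 \<le> snd x \<and> snd x \<le> fst x then X (snd x) else 0))"
  have Km[measurable]: "K \<in> borel_measurable (lborel \<Otimes>\<^sub>M lborel)" unfolding K_def by measurable
  define Bd where "Bd = (\<lambda>x::real\<times>real. g0 (fst x) * indicator {0..vb} (snd x))"
  have Bdm[measurable]: "Bd \<in> borel_measurable (lborel \<Otimes>\<^sub>M lborel)" unfolding Bd_def by measurable
  have Bd_int: "integrable (lborel \<Otimes>\<^sub>M lborel) Bd"
  proof (rule integrableI_nonneg)
    show "Bd \<in> borel_measurable (lborel \<Otimes>\<^sub>M lborel)" by (rule Bdm)
    show "AE x in lborel \<Otimes>\<^sub>M lborel. 0 \<le> Bd x" using g0_nonneg by (auto simp: Bd_def)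
    have "(\<integral>\<^sup>+x. ennreal (Bd x) \<partial>(lborel \<Otimes>\<^sub>M lborel)) = (\<integral>\<^sup>+t. \<integral>\<^sup>+s. ennreal (Bd (t,s)) \<partial>lborel \<partial>lborel)"
      by (rule lborel.nn_integral_fst[symmetric]) measurable
    also have "\<dots> = (\<integral>\<^sup>+t. ennreal (g0 t) * ennreal vb \<partial>lborel)"
    proof (rule nn_integral_cong)
      fix t
      have "(\<integral>\<^sup>+s. ennreal (Bd (t,s)) \<partial>lborel) = (\<integral>\<^sup>+s. ennreal (g0 t) * indicator {0..vb} s \<partial>lborel)"
        by (rule nn_integral_cong) (auto simp: Bd_def indicator_def)
      also have "\<dots> = ennreal (g0 t) * emeasure lborel {0..vb}" by (subst nn_integral_cmult) auto
      finally show "(\<integral>\<^sup>+s. ennreal (Bd (t,s)) \<partial>lborel) = ennreal (g0 t) * ennreal vb" using vb by simp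
    qed
    also have "\<dots> = (\<integral>\<^sup>+t. ennreal (g0 t) \<partial>lborel) * ennreal vb" by (subst nn_integral_multc) auto
    also have "\<dots> = ennreal vb" using g0_nn by simp
    finally show "(\<integral>\<^sup>+x. ennreal (Bd x) \<partial>(lborel \<Otimes>\<^sub>M lborel)) < \<infinity>" by simp
  qed
  have Kb: "norm (K x) \<le> norm (Bd x)" for x
  proof -
    obtain t s where x: "x = (t,s)" by (cases x)
    show ?thesis
    proof (cases "0 \<le> s \<and> s \<le> t \<and> t \<le> vb \<and> 0 \<le> t")
      case True
      then show ?thesis using Xb[of s] g0_nonneg[of t]
        by (auto simp: x K_def Bd_def abs_mult intro!: mult_left_le)
    next
      case False
      then show ?thesis by (auto simp: x K_def Bd_def g0_def indicator_def)
    qed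
  qed
  have K_int: "integrable (lborel \<Otimes>\<^sub>M lborel) K"
    by (rule Bochner_Integration.integrable_bound[OF Bd_int Km]) (use Kb in auto)
  have F: "(\<integral>s. \<integral>t. K (t,s) \<partial>lborel \<partial>lborel) = (\<integral>t. \<integral>s. K (t,s) \<partial>lborel \<partial>lborel)"
    using lborel_pair.Fubini_integral[of "\<lambda>t s. K (t,s)"] K_int by simp
  have R: "(\<integral>t. \<integral>s. K (t,s) \<partial>lborel \<partial>lborel) = integral {0..vb} (\<lambda>t. f t * A t)"
  proof -
    have "(\<integral>s. K (t,s) \<partial>lborel) = g0 t * A t" for t
    proof -
      have "(\<integral>s. K (t,s) \<partial>lborel) = (\<integral>s. g0 t * (indicator {0..t} s *\<^sub>R X s) \<partial>lborel)"
        by (rule Bochner_Integration.integral_cong) (auto simp: K_def indicator_def)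
      also have "\<dots> = g0 t * (LINT s:{0..t}|lborel. X s)"
        unfolding set_lebesgue_integral_def by simp
      also have "\<dots> = g0 t * A t" using bdd_setint(3)[OF Xm, of 0 t 1] Xb A_def by simp
      finally show ?thesis .
    qed
    then have "(\<integral>t. \<integral>s. K (t,s) \<partial>lborel \<partial>lborel) = (\<integral>t. g0 t * A t \<partial>lborel)" by simp
    also have "\<dots> = integral {0..vb} (\<lambda>t. f t * A t)"
    proof (rule M_int(4)[OF Am, of vb], intro ballI)
      fix t :: real assume "t \<in> {0..vb}" then show "\<bar>A t\<bar> \<le> vb" using Ab[of t] by auto
    qed
    finally show ?thesis .
  qed
  have L: "(\<integral>s. \<integral>t. K (t,s) \<partial>lborel \<partial>lborel) = integral {0..vb} (\<lambda>s. X s * (1 - cdf f s))"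
  proof -
    have "(\<integral>t. K (t,s) \<partial>lborel) = indicator {0..vb} s *\<^sub>R (X s * (1 - cc s))" for s
    proof -
      have "(\<integral>t. K (t,s) \<partial>lborel) = (\<integral>t. (if 0 \<le> s then X s else 0) * (g0 t * indicator {s..} t) \<partial>lborel)"
        by (rule Bochner_Integration.integral_cong) (auto simp: K_def indicator_def)
      also have "\<dots> = (if 0 \<le> s then X s else 0) * (\<integral>t. g0 t * indicator {s..} t \<partial>lborel)"
        by simp
      also have "(\<integral>t. g0 t * indicator {s..} t \<partial>lborel) = integral {0..vb} (\<lambda>t. f t * indicator {s..} t)"
      proof (rule M_int(4)[of _ 1])
        show "(\<lambda>t. indicator {s..} t :: real) \<in> borel_measurable borel"
          by (intro borel_measurable_indicator borel_closed) (rule closed_atLeast)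
        show "\<forall>t\<in>{0..vb}. \<bar>indicator {s..} t :: real\<bar> \<le> 1" by (simp add: indicator_def)
      qed
      also have "integral {0..vb} (\<lambda>t. f t * indicator {s..} t) = integral ({s..} \<inter> {0..vb}) f"
        by (subst integral_restrict_Int[symmetric]) (auto simp: indicator_def intro!: integral_cong)
      finally have eq: "(\<integral>t. K (t,s) \<partial>lborel) = (if 0 \<le> s then X s else 0) * integral ({s..} \<inter> {0..vb}) f" .
      show ?thesis
      proof (cases "s \<in> {0..vb}")
        case True
        then have "{s..} \<inter> {0..vb} = {s..vb}" by auto
        then show ?thesis using eq True cdf_split[of s] cl_id[of s] by (auto simp: cc_def)
      next
        case False
        then have "0 \<le> s \<Longrightarrow> {s..} \<inter> {0..vb} = {}" by auto
        then show ?thesis using eq False by auto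
      qed
    qed
    then have "(\<integral>s. \<integral>t. K (t,s) \<partial>lborel \<partial>lborel) = (LINT s:{0..vb}|lborel. X s * (1 - cc s))"
      unfolding set_lebesgue_integral_def by simp
    also have "\<dots> = integral {0..vb} (\<lambda>s. X s * (1 - cc s))"
    proof (rule bdd_setint(3)[of _ _ _ 1])
      show "(\<lambda>s. X s * (1 - cc s)) \<in> borel_measurable borel" by measurable
      show "\<forall>t\<in>{0..vb}. \<bar>X t * (1 - cc t)\<bar> \<le> 1"
        using Xb cdf_bnd cl_in cl_id by (auto simp: cc_def abs_mult intro!: mult_le_one)
    qed
    also have "\<dots> = integral {0..vb} (\<lambda>s. X s * (1 - cdf f s))"
      by (rule integral_cong) (auto simp: cc_def cl_id)
    finally show ?thesis .
  qed
  have i1: "(\<lambda>t. f t * (t * X t)) integrable_on {0..vb}"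
  proof (rule M_int(3)[of _ vb])
    show "(\<lambda>t. t * X t) \<in> borel_measurable borel" by measurable
    show "\<forall>t\<in>{0..vb}. \<bar>t * X t\<bar> \<le> vb"
    proof
      fix t :: real assume t: "t \<in> {0..vb}"
      have "t * X t \<le> t * 1" using Xb[of t] t by (intro mult_left_mono) auto
      then show "\<bar>t * X t\<bar> \<le> vb" using Xb[of t] t by auto
    qed
  qed
  have i2: "(\<lambda>t. f t * A t) integrable_on {0..vb}"
  proof (rule M_int(3)[OF Am, of vb], intro ballI)
    fix t :: real assume "t \<in> {0..vb}" then show "\<bar>A t\<bar> \<le> vb" using Ab[of t] by auto
  qed
  have i3: "(\<lambda>s. X s * (1 - cdf f s)) integrable_on {0..vb}"
  proof -
    have "(\<lambda>s. X s * (1 - cc s)) integrable_on {0..vb}"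
    proof (rule bdd_setint(2)[of _ _ _ 1])
      show "(\<lambda>s. X s * (1 - cc s)) \<in> borel_measurable borel" by measurable
      show "\<forall>t\<in>{0..vb}. \<bar>X t * (1 - cc t)\<bar> \<le> 1"
        using Xb cdf_bnd cl_in cl_id by (auto simp: cc_def abs_mult intro!: mult_le_one)
    qed
    then show ?thesis by (rule integrable_eq) (auto simp: cc_def cl_id)
  qed
  have "integral {0..vb} (\<lambda>t. f t * (t * X t - integral {0..t} X)) =
        integral {0..vb} (\<lambda>t. f t * (t * X t) - f t * A t)"
    by (rule integral_cong) (auto simp: A_def algebra_simps)
  also have "\<dots> = integral {0..vb} (\<lambda>t. f t * (t * X t)) - integral {0..vb} (\<lambda>t. f t * A t)"
    using i1 i2 by (rule integral_diff)
  also have "integral {0..vb} (\<lambda>t. f t * A t) = integral {0..vb} (\<lambda>s. X s * (1 - cdf f s))"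
    using F R L by simp
  also have "integral {0..vb} (\<lambda>t. f t * (t * X t)) - integral {0..vb} (\<lambda>s. X s * (1 - cdf f s))
      = integral {0..vb} (\<lambda>t. f t * (t * X t) - X t * (1 - cdf f t))"
    using i1 i3 by (rule integral_diff[symmetric])
  also have "\<dots> = integral {0..vb} (\<lambda>t. f t * (X t * virt f t))"
  proof (rule integral_cong)
    fix t assume "t \<in> {0..vb}"
    then have "f t > 0" using fpos by auto
    then show "f t * (t * X t) - X t * (1 - cdf f t) = f t * (X t * virt f t)"
      by (simp add: virt_def field_simps)
  qed
  finally show ?thesis .
qed

end



lemma card_filter_sum: "finite A \<Longrightarrow> card {j\<in>A. P j} = (\<Sum>j\<in>A. if P j then 1 else 0)"
  by (simp add: sum.If_cases Int_def)

lemma eff_alloc_alt: "eff_alloc n k v i =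
  (if (\<Sum>j<n. (if v j > v i \<or> (v j = v i \<and> j < i) then 1 else 0) :: real) < real k then 1 else 0)"
proof -
  have "real (card {j\<in>{..<n}. v j > v i \<or> (v j = v i \<and> j < i)}) =
        (\<Sum>j<n. (if v j > v i \<or> (v j = v i \<and> j < i) then 1 else 0) :: real)"
    by (subst card_filter_sum) (auto simp: of_nat_sum intro!: sum.cong)
  then show ?thesis unfolding eff_alloc_def
    by simp
qed

lemma rank_facts:
  fixes v :: "nat \<Rightarrow> real"
  assumes "k \<le> n"
  shows "card {i\<in>{..<n}. eff_alloc n k v i = 1} = k"
proof -
  define R where "R j i \<longleftrightarrow> v j > v i \<or> (v j = v i \<and> j < i)" for j i
  define rk where "rk i = card {j\<in>{..<n}. R j i}" for i
  have trans: "R l j \<Longrightarrow> R j i \<Longrightarrow> R l i" for l j i unfolding R_def by auto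
  have irr: "\<not> R i i" for i unfolding R_def by auto
  have lin: "i \<noteq> j \<Longrightarrow> R j i \<or> R i j" for i j unfolding R_def by auto
  have lt: "R j i \<Longrightarrow> j < n \<Longrightarrow> rk j < rk i" for i j
  proof -
    assume "R j i" "j < n"
    then have "{l\<in>{..<n}. R l j} \<subset> {l\<in>{..<n}. R l i}"
      using trans irr by blast
    then show "rk j < rk i" unfolding rk_def by (intro psubset_card_mono) auto
  qed
  have inj: "inj_on rk {..<n}"
  proof (rule inj_onI)
    fix i j assume "i \<in> {..<n}" "j \<in> {..<n}" "rk i = rk j"
    then show "i = j" using lin[of i j] lt[of j i] lt[of i j] by (cases "i = j") auto
  qed
  have rkn: "rk i < n" if "i < n" for i
  proof -
    have "{j\<in>{..<n}. R j i} \<subseteq> {..<n} - {i}" using irr by auto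
    then have "rk i \<le> card ({..<n} - {i})" unfolding rk_def by (intro card_mono) auto
    then show ?thesis using that by auto
  qed
  have img: "rk ` {..<n} = {..<n}"
  proof (rule card_subset_eq)
    show "rk ` {..<n} \<subseteq> {..<n}" using rkn by auto
    show "card (rk ` {..<n}) = card {..<n}" using card_image[OF inj] by simp
  qed auto
  have ea: "eff_alloc n k v i = 1 \<longleftrightarrow> rk i < k" for i
    unfolding eff_alloc_def rk_def R_def by auto
  have "{i\<in>{..<n}. eff_alloc n k v i = 1} = {i\<in>{..<n}. rk i < k}" using ea by auto
  moreover have "card {i\<in>{..<n}. rk i < k} = card (rk ` {i\<in>{..<n}. rk i < k})"
    by (rule card_image[symmetric]) (rule inj_on_subset[OF inj], auto)
  moreover have "rk ` {i\<in>{..<n}. rk i < k} = {..<k}"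
  proof -
    have "rk ` {i\<in>{..<n}. rk i < k} = {x\<in>rk ` {..<n}. x < k}" by auto
    then show ?thesis using img assms by auto
  qed
  ultimately show ?thesis by simp
qed


lemma aux_meas:
  fixes f1 f2 :: "'a \<Rightarrow> real"
  assumes [measurable]: "f1 \<in> borel_measurable M" "f2 \<in> borel_measurable M"
  shows "(\<lambda>x. (if f1 x > f2 x \<or> (f1 x \<le> f2 x \<and> f2 x \<le> f1 x \<and> b) then 1 else 0) :: real) \<in> borel_measurable M"
  by measurable

lemma aux_meas2:
  fixes g :: "'a \<Rightarrow> real"
  assumes [measurable]: "g \<in> borel_measurable M"
  shows "(\<lambda>x. (if g x < c then 1 else 0) :: real) \<in> borel_measurable M"
  by measurable

locale T = S +
  fixes n k :: nat
  assumes kn: "k < n"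
begin

abbreviation "MM \<equiv> val_dist vb f"
abbreviation "PP \<equiv> prof_dist n vb f"

lemma PP_def': "PP = PiM {..<n} (\<lambda>_. MM)" by (simp add: prof_dist_def)

lemma PP_prob: "prob_space PP"
  unfolding PP_def' by (rule prob_space_PiM) (rule M_prob)

lemma upd_meas[measurable]:
  assumes "i < n" and "sets N = sets borel"
  shows "(\<lambda>x. (snd x)(i := fst x)) \<in> measurable (N \<Otimes>\<^sub>M PP) PP"
  unfolding PP_def'
proof (rule measurable_fun_upd[where J="{..<n}"])
  show "{..<n} = {..<n} \<union> {i}" using assms by auto
  show "snd \<in> measurable (N \<Otimes>\<^sub>M Pi\<^sub>M {..<n} (\<lambda>_. MM)) (Pi\<^sub>M {..<n} (\<lambda>_. MM))" by measurable
  show "fst \<in> measurable (N \<Otimes>\<^sub>M Pi\<^sub>M {..<n} (\<lambda>_. MM)) MM"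
    by (rule measurable_compose[OF measurable_fst measurable_ident_sets]) (use assms(2) in simp)
qed

lemma upd_meas1:
  assumes "i < n"
  shows "(\<lambda>v. v(i := t)) \<in> measurable PP PP"
  unfolding PP_def'
proof (rule measurable_fun_upd[where J="{..<n}"])
  show "{..<n} = {..<n} \<union> {i}" using assms by auto
qed auto

lemma D:
  assumes i: "i < n" and g: "integrable PP g"
  shows "integral\<^sup>L PP g = (\<integral>t. interim n vb f g i t \<partial>MM)"
proof -
  interpret P: prob_space PP by (rule PP_prob)
  interpret M: prob_space MM by (rule M_prob)
  interpret MP: pair_prob_space MM PP ..
  have eqf: "(\<lambda>(t, v). v(i := t)) = (\<lambda>x::real \<times> (nat \<Rightarrow> real). (snd x)(i := fst x))" by (auto simp: fun_eq_iff)
  have dist: "distr (MM \<Otimes>\<^sub>M PP) PP (\<lambda>x. (snd x)(i := fst x)) = PP"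
    using distr_pair_PiM_eq_PiM[of "{..<n}" "\<lambda>_. MM" i] M_prob i
    by (simp add: PP_def' insert_absorb eqf)
  have meas: "(\<lambda>x. (snd x)(i := fst x)) \<in> measurable (MM \<Otimes>\<^sub>M PP) PP"
    using i by (intro upd_meas) auto
  have gm: "g \<in> borel_measurable PP" using g by simp
  have "integral\<^sup>L PP g = integral\<^sup>L (distr (MM \<Otimes>\<^sub>M PP) PP (\<lambda>x. (snd x)(i := fst x))) g"
    using dist by simp
  also have "\<dots> = (\<integral>x. g ((snd x)(i := fst x)) \<partial>(MM \<Otimes>\<^sub>M PP))"
    by (rule integral_distr[OF meas gm])
  also have "\<dots> = (\<integral>t. \<integral>v. g (v(i := t)) \<partial>PP \<partial>MM)"
  proof -
    have "integrable (MM \<Otimes>\<^sub>M PP) (\<lambda>x. g ((snd x)(i := fst x)))"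
      using g dist integrable_distr_eq[OF meas gm] by simp
    from MP.integral_fst'[OF this] show ?thesis by simp
  qed
  finally show ?thesis unfolding interim_def .
qed

lemma AE_comp: "i < n \<Longrightarrow> AE t in MM. Q t \<Longrightarrow> AE v in PP. Q (v i)"
  unfolding PP_def' by (rule AE_PiM_component) (auto simp: M_prob)

lemma interim_meas:
  assumes i: "i < n" and gm[measurable]: "g \<in> borel_measurable PP"
  shows "interim n vb f g i \<in> borel_measurable borel"
proof -
  interpret P: prob_space PP by (rule PP_prob)
  have "(\<lambda>x. g ((snd x)(i := fst x))) \<in> borel_measurable (borel \<Otimes>\<^sub>M PP)"
    using upd_meas[OF i, of borel] by measurable
  then have "case_prod (\<lambda>t v. g (v(i := t))) \<in> borel_measurable (borel \<Otimes>\<^sub>M PP)"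
    by (simp add: split_beta')
  then show ?thesis unfolding interim_def by (rule P.borel_measurable_lebesgue_integral)
qed

lemma alloc_meas[measurable]: "i < n \<Longrightarrow> (\<lambda>v. eff_alloc n k v i) \<in> borel_measurable PP"
proof -
  assume i: "i < n"
  have e: "(\<lambda>v. eff_alloc n k v i) = (\<lambda>v.
    (if (\<Sum>j<n. (if v j > v i \<or> (v j \<le> v i \<and> v i \<le> v j \<and> j < i) then 1 else 0) :: real) < real k then 1 else 0))"
  proof (intro ext)
    fix v :: "nat \<Rightarrow> real"
    have "(\<Sum>j<n. (if v j > v i \<or> (v j = v i \<and> j < i) then 1 else 0) :: real) =
          (\<Sum>j<n. (if v j > v i \<or> (v j \<le> v i \<and> v i \<le> v j \<and> j < i) then 1 else 0))"
      by (intro sum.cong) auto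
    then show "eff_alloc n k v i = (if (\<Sum>j<n. (if v j > v i \<or> (v j \<le> v i \<and> v i \<le> v j \<and> j < i) then 1 else 0) :: real) < real k then 1 else 0)"
      unfolding eff_alloc_alt by simp
  qed
  have sb: "sets (PiM {..<n} (\<lambda>_. MM)) = sets (PiM {..<n} (\<lambda>_. borel :: real measure))"
    by (rule sets_PiM_cong) auto
  have "(\<lambda>v. eff_alloc n k v i) \<in> borel_measurable (PiM {..<n} (\<lambda>_. borel :: real measure))"
  proof -
    let ?PB = "PiM {..<n} (\<lambda>_. borel :: real measure)"
    have ci: "(\<lambda>w. w i) \<in> borel_measurable ?PB"
      using i by (intro measurable_component_singleton) auto
    have trm: "(\<lambda>v. (if v j > v i \<or> (v j \<le> v i \<and> v i \<le> v j \<and> j < i) then 1 else 0) :: real) \<in> borel_measurable ?PB"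
      if j: "j \<in> {..<n}" for j
    proof -
      have cj[measurable]: "(\<lambda>w. w j) \<in> borel_measurable ?PB"
        using j by (intro measurable_component_singleton) auto
      show ?thesis using aux_meas[OF cj ci, of "j < i"] by simp
    qed
    have sm: "(\<lambda>v. (\<Sum>j<n. (if v j > v i \<or> (v j \<le> v i \<and> v i \<le> v j \<and> j < i) then 1 else 0) :: real)) \<in> borel_measurable ?PB"
      by (rule borel_measurable_sum) (rule trm)
    show ?thesis unfolding e using aux_meas2[OF sm, of "real k"] by simp
  qed
  then show ?thesis unfolding PP_def' using measurable_cong_sets[OF sb refl] by blast
qed

end

context T begin

definition C0 where "C0 = \<bar>virt f 0\<bar> + \<bar>virt f vb\<bar>"

lemma bdd_int_PP:
  fixes g :: "(nat \<Rightarrow> real) \<Rightarrow> real" and B :: real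
  assumes "g \<in> borel_measurable PP" "\<And>v. \<bar>g v\<bar> \<le> B"
  shows "integrable PP g"
proof -
  interpret P: prob_space PP by (rule PP_prob)
  show ?thesis by (rule P.integrable_const_bound[where B=B]) (use assms in \<open>auto simp: real_norm_def\<close>)
qed

lemma alloc01: "eff_alloc n k v i = 0 \<or> eff_alloc n k v i = 1"
  by (simp add: eff_alloc_def)

lemma X_props:
  assumes i: "i < n"
  shows "x_eff n k vb f i \<in> borel_measurable borel" "0 \<le> x_eff n k vb f i t" "x_eff n k vb f i t \<le> 1"
proof -
  interpret P: prob_space PP by (rule PP_prob)
  show "x_eff n k vb f i \<in> borel_measurable borel"
    unfolding x_eff_def by (rule interim_meas[OF i alloc_meas[OF i]])
  have m: "(\<lambda>v. eff_alloc n k (v(i := t)) i) \<in> borel_measurable PP"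
    using measurable_compose[OF upd_meas1[OF i, of t] alloc_meas[OF i]] by simp
  have int: "integrable PP (\<lambda>v. eff_alloc n k (v(i := t)) i)"
    by (rule bdd_int_PP[OF m, of 1]) (use alloc01 in \<open>auto simp: eff_alloc_def\<close>)
  show "0 \<le> x_eff n k vb f i t" unfolding x_eff_def interim_def
    by (rule Bochner_Integration.integral_nonneg) (simp add: eff_alloc_def)
  show "x_eff n k vb f i t \<le> 1" unfolding x_eff_def interim_def
    by (rule P.integral_le_const[OF int]) (simp add: eff_alloc_def)
qed

lemma psi_int_eq:
  assumes i: "i < n"
  shows "(\<integral>v. eff_alloc n k v i * psi (v i) \<partial>PP) = integral {0..vb} (\<lambda>t. f t * (x_eff n k vb f i t * virt f t))"
proof -
  interpret P: prob_space PP by (rule PP_prob)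
  have Xm[measurable]: "x_eff n k vb f i \<in> borel_measurable borel" using X_props(1)[OF i] .
  have cm: "(\<lambda>v. v i) \<in> measurable PP MM"
    unfolding PP_def' by (rule measurable_component_singleton) (use i in auto)
  have cm': "(\<lambda>v. v i) \<in> borel_measurable PP"
    using cm measurable_cong_sets[OF refl sets_M] by blast
  have gm: "(\<lambda>v. eff_alloc n k v i * psi (v i)) \<in> borel_measurable PP"
    using alloc_meas[OF i] measurable_compose[OF cm' psi_meas] by (rule borel_measurable_times)
  have gb: "\<bar>eff_alloc n k v i * psi (v i)\<bar> \<le> C0" for v
    using psi_bnd[of "v i"] alloc01[of v i] by (auto simp: C0_def)
  have "(\<integral>v. eff_alloc n k v i * psi (v i) \<partial>PP) = (\<integral>t. interim n vb f (\<lambda>v. eff_alloc n k v i * psi (v i)) i t \<partial>MM)"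
    by (rule D[OF i bdd_int_PP[OF gm gb]])
  also have "\<dots> = (\<integral>t. x_eff n k vb f i t * psi t \<partial>MM)"
    by (simp add: interim_def x_eff_def)
  also have "\<dots> = integral {0..vb} (\<lambda>t. f t * (x_eff n k vb f i t * psi t))"
  proof (rule M_int(2)[where B=C0])
    show "(\<lambda>t. x_eff n k vb f i t * psi t) \<in> borel_measurable borel" by measurable
    show "\<forall>t\<in>{0..vb}. \<bar>x_eff n k vb f i t * psi t\<bar> \<le> C0"
    proof
      fix t
      have "\<bar>x_eff n k vb f i t * psi t\<bar> \<le> 1 * C0"
        unfolding abs_mult using X_props(2,3)[OF i, of t] psi_bnd[of t]
        by (intro mult_mono) (auto simp: C0_def)
      then show "\<bar>x_eff n k vb f i t * psi t\<bar> \<le> C0" by simp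
    qed
  qed
  also have "\<dots> = integral {0..vb} (\<lambda>t. f t * (x_eff n k vb f i t * virt f t))"
    by (rule integral_cong) (simp add: psi_def cl_id)
  finally show ?thesis .
qed

lemma psi_zero:
  assumes i: "i < n"
  shows "(\<integral>v. psi (v i) \<partial>PP) = 0"
proof -
  interpret P: prob_space PP by (rule PP_prob)
  have cm: "(\<lambda>v. v i) \<in> measurable PP MM"
    unfolding PP_def' by (rule measurable_component_singleton) (use i in auto)
  have cm': "(\<lambda>v. v i) \<in> borel_measurable PP"
    using cm measurable_cong_sets[OF refl sets_M] by blast
  have gm: "(\<lambda>v. psi (v i)) \<in> borel_measurable PP"
    using measurable_compose[OF cm' psi_meas] .
  have "(\<integral>v. psi (v i) \<partial>PP) = (\<integral>t. interim n vb f (\<lambda>v. psi (v i)) i t \<partial>MM)"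
    by (rule D[OF i bdd_int_PP[OF gm psi_bnd]])
  also have "\<dots> = (\<integral>t. psi t \<partial>MM)"
    by (simp add: interim_def P.prob_space)
  also have "\<dots> = integral {0..vb} (\<lambda>t. f t * psi t)"
    by (rule M_int(2)[where B=C0]) (auto simp: psi_bnd C0_def)
  also have "\<dots> = integral {0..vb} (\<lambda>t. f t * ((\<lambda>_. 1) t * virt f t))"
    by (rule integral_cong) (simp add: psi_def cl_id)
  also have "\<dots> = integral {0..vb} (\<lambda>t. f t * (t * (\<lambda>_. 1) t - integral {0..t} (\<lambda>_. 1)))"
    by (rule E[symmetric]) auto
  also have "\<dots> = integral {0..vb} (\<lambda>t. 0)"
    by (rule integral_cong) auto
  finally show ?thesis by simp
qed

lemma rev_i:
  assumes i: "i < n" and imp: "implements_eff_IR n k vb f P"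
  shows "(\<integral>v. P v i \<partial>PP) = (\<integral>v. eff_alloc n k v i * psi (v i) \<partial>PP)"
proof -
  interpret P: prob_space PP by (rule PP_prob)
  have Pint: "integrable PP (\<lambda>v. P v i)" using imp i by (simp add: implements_eff_IR_def)
  have Pz: "\<And>t. t \<in> {0..vb} \<Longrightarrow> interim n vb f (\<lambda>v. P v i) i t = z_eff n k vb f i t"
    using imp i by (simp add: implements_eff_IR_def)
  have Xm[measurable]: "x_eff n k vb f i \<in> borel_measurable borel" using X_props(1)[OF i] .
  have X01: "\<And>t. 0 \<le> x_eff n k vb f i t \<and> x_eff n k vb f i t \<le> 1" using X_props(2,3)[OF i] by auto
  have hm: "interim n vb f (\<lambda>v. P v i) i \<in> borel_measurable borel"
    using interim_meas[OF i] Pint by simp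
  have zb: "\<bar>interim n vb f (\<lambda>v. P v i) i t\<bar> \<le> vb" if t: "t \<in> {0..vb}" for t
  proof -
    have a: "0 \<le> integral {0..t} (x_eff n k vb f i) \<and> integral {0..t} (x_eff n k vb f i) \<le> t"
      using mono_int(2)[OF Xm X01] t by auto
    have b: "0 \<le> t * x_eff n k vb f i t \<and> t * x_eff n k vb f i t \<le> t"
      using X01[of t] t mult_left_mono[of "x_eff n k vb f i t" 1 t] by auto
    show ?thesis using Pz[OF t] a b t unfolding z_eff_def by auto
  qed
  have "(\<integral>v. P v i \<partial>PP) = (\<integral>t. interim n vb f (\<lambda>v. P v i) i t \<partial>MM)"
    by (rule D[OF i Pint])
  also have "\<dots> = integral {0..vb} (\<lambda>t. f t * interim n vb f (\<lambda>v. P v i) i t)"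
    by (rule M_int(2)[OF hm, where B=vb]) (use zb in auto)
  also have "\<dots> = integral {0..vb} (\<lambda>t. f t * (t * x_eff n k vb f i t - integral {0..t} (x_eff n k vb f i)))"
    by (rule integral_cong) (simp add: Pz z_eff_def)
  also have "\<dots> = integral {0..vb} (\<lambda>t. f t * (x_eff n k vb f i t * virt f t))"
    by (rule E[OF Xm X01])
  also have "\<dots> = (\<integral>v. eff_alloc n k v i * psi (v i) \<partial>PP)"
    by (rule psi_int_eq[OF i, symmetric])
  finally show ?thesis .
qed

end

context T begin

lemma comp_meas: "i < n \<Longrightarrow> (\<lambda>v. v i) \<in> borel_measurable PP"
proof -
  assume i: "i < n"
  have cm: "(\<lambda>v. v i) \<in> measurable PP MM"
    unfolding PP_def' by (rule measurable_component_singleton) (use i in auto)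
  then show ?thesis using measurable_cong_sets[OF refl sets_M] by blast
qed

lemma intA: "i < n \<Longrightarrow> integrable PP (\<lambda>v. eff_alloc n k v i * psi (v i))"
proof -
  assume i: "i < n"
  have gm: "(\<lambda>v. eff_alloc n k v i * psi (v i)) \<in> borel_measurable PP"
    using alloc_meas[OF i] measurable_compose[OF comp_meas[OF i] psi_meas] by (rule borel_measurable_times)
  have gb: "\<bar>eff_alloc n k v i * psi (v i)\<bar> \<le> C0" for v
    using psi_bnd[of "v i"] alloc01[of v i] by (auto simp: C0_def)
  show ?thesis by (rule bdd_int_PP[OF gm gb])
qed

lemma intB: "i < n \<Longrightarrow> integrable PP (\<lambda>v. psi (v i))"
  by (rule bdd_int_PP[OF measurable_compose[OF comp_meas psi_meas] psi_bnd])

lemma main: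
  assumes imp: "implements_eff_IR n k vb f P"
  shows "(\<integral>v. (\<Sum>i<n. P v i) \<partial>PP) < - (real n - real k) * virt f 0"
proof -
  interpret P: prob_space PP by (rule PP_prob)
  define Y where "Y v = (\<Sum>i<n. eff_alloc n k v i * psi (v i)) - (\<Sum>i<n. psi (v i))" for v
  have intY: "integrable PP Y"
    unfolding Y_def using intA intB by (intro Bochner_Integration.integrable_diff Bochner_Integration.integrable_sum) auto
  have "(\<integral>v. (\<Sum>i<n. P v i) \<partial>PP) = (\<Sum>i<n. \<integral>v. P v i \<partial>PP)"
    using Bochner_Integration.integral_sum[of "{..<n}" PP "\<lambda>i v. P v i"] imp
    by (simp add: implements_eff_IR_def)
  also have "\<dots> = (\<Sum>i<n. \<integral>v. eff_alloc n k v i * psi (v i) \<partial>PP)"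
    by (rule sum.cong) (simp_all add: rev_i imp)
  also have "\<dots> = (\<Sum>i<n. \<integral>v. eff_alloc n k v i * psi (v i) \<partial>PP) - (\<Sum>i<n. \<integral>v. psi (v i) \<partial>PP)"
    using psi_zero by simp
  also have "\<dots> = integral\<^sup>L PP Y"
  proof -
    have "integral\<^sup>L PP Y = (\<integral>v. (\<Sum>i<n. eff_alloc n k v i * psi (v i)) \<partial>PP) - (\<integral>v. (\<Sum>i<n. psi (v i)) \<partial>PP)"
      unfolding Y_def using intA intB
      by (intro Bochner_Integration.integral_diff Bochner_Integration.integrable_sum) auto
    also have "\<dots> = (\<Sum>i<n. \<integral>v. eff_alloc n k v i * psi (v i) \<partial>PP) - (\<Sum>i<n. \<integral>v. psi (v i) \<partial>PP)"
      using intA intB by (simp add: integral_sum)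
    finally show ?thesis by simp
  qed
  finally have R: "(\<integral>v. (\<Sum>i<n. P v i) \<partial>PP) = integral\<^sup>L PP Y" .
  have AEpos: "AE v in PP. \<forall>j\<in>{..<n}. v j \<in> {0<..vb}"
  proof (rule AE_finite_allI)
    fix j assume "j \<in> {..<n}"
    then show "AE v in PP. v j \<in> {0<..vb}" using AE_comp[of j "\<lambda>t. t \<in> {0<..vb}"] M_AE by simp
  qed simp
  have "AE v in PP. Y v < - (real n - real k) * virt f 0"
    using AEpos
  proof eventually_elim
    case (elim v)
    define W where "W = {i\<in>{..<n}. eff_alloc n k v i = 1}"
    define L where "L = {i\<in>{..<n}. eff_alloc n k v i = 0}"
    have cW: "card W = k" unfolding W_def using rank_facts[of k n v] kn by simp
    have LW: "L = {..<n} - W" unfolding L_def W_def using alloc01 by auto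
    have cL: "card L = n - k" unfolding LW using cW kn
      by (subst card_Diff_subset) (auto simp: W_def)
    have fL: "finite L" unfolding L_def by auto
    have neL: "L \<noteq> {}" using cL kn by auto
    have "(\<Sum>i<n. eff_alloc n k v i * psi (v i)) - (\<Sum>i<n. psi (v i)) = (\<Sum>i<n. (eff_alloc n k v i - 1) * psi (v i))"
      by (simp add: sum_subtractf[symmetric] algebra_simps)
    also have "\<dots> = (\<Sum>i<n. if eff_alloc n k v i = 0 then - psi (v i) else 0)"
      by (rule sum.cong) (use alloc01 in auto)
    also have "\<dots> = (\<Sum>i\<in>L. - psi (v i))"
      unfolding L_def by (rule sum.inter_filter[symmetric]) auto
    finally have Yv: "Y v = - (\<Sum>i\<in>L. psi (v i))" by (simp add: Y_def sum_negf)
    have "(\<Sum>i\<in>L. virt f 0) < (\<Sum>i\<in>L. psi (v i))"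
    proof (rule sum_strict_mono[OF fL neL])
      fix i assume "i \<in> L"
      then have vi: "v i \<in> {0<..vb}" using elim unfolding L_def by auto
      then have "psi (v i) = virt f (v i)" by (simp add: psi_def cl_id)
      moreover have "virt f 0 < virt f (v i)"
        using smono vi vb by (auto simp: strict_mono_on_def)
      ultimately show "virt f 0 < psi (v i)" by simp
    qed
    moreover have "real (card L) = real n - real k"
      using cL kn by (simp add: of_nat_diff)
    ultimately have "(real n - real k) * virt f 0 < (\<Sum>i\<in>L. psi (v i))" by (simp only: sum_constant)
    then show ?case using Yv by linarith
  qed
  then have "integral\<^sup>L PP Y < integral\<^sup>L PP (\<lambda>_. - (real n - real k) * virt f 0)"
    by (intro P.integral_less_AE_space intY) (auto simp: P.emeasure_space_1)
  then show ?thesis using R by (simp add: P.prob_space)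
qed

end

theorem mainTheorem11:
  fixes n k :: nat and vb :: real and f :: "real \<Rightarrow> real"
    and P :: "(nat \<Rightarrow> real) \<Rightarrow> nat \<Rightarrow> real"
  assumes "2 \<le> k" and "k < n" and "0 < vb"
    and "f \<in> borel_measurable borel"
    and "\<forall>x\<in>{0..vb}. f x > 0"
    and "(f has_integral 1) {0..vb}"
    and "strict_mono_on {0..vb} (virt f)"
    and "implements_eff_IR n k vb f P"
  shows "(\<integral>v. (\<Sum>i<n. P v i) \<partial>prof_dist n vb f) < - (real n - real k) * virt f 0"
proof -
  interpret T vb f n k
    by unfold_locales (use assms in auto)
  show ?thesis by (rule main) (rule assms(8))
qed


end
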